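(* Let $F(V)$ be the set of formulas of $\mathrm{q}\L^{*}$, $\sim$ the relation $p\sim q$ iff $\vdash p\leftrightarrow q$, and $[p]_\sim$ the class of $p$. On $[F(V)]_\sim$ define $-[p]_\sim:=[\neg p]_\sim$, $[p]_\sim\oplus[q]_\sim:=[\neg p\to q]_\sim$, $[0]_\sim:=[p\to p]_\sim$ (for any $p$), and let $[1]_\sim$ be the class of the constant $1$. Then $\langle [F(V)]_\sim;\oplus,-,[0]_\sim,[1]_\sim\rangle$ is an MV*-algebra.
   Context: Let $V=\{p_1,p_2,\ldots\}$ be a set of propositional variables and $F(V)$ the set of formulas built from $V$ and the constant $1$ with the binary connective $\to$ and the unary connectives $\neg$, ${}^{+}$, ${}^{-}$ (postfix ${}^+,{}^-$ bind tighter than $\neg$, which binds tighter than $\to$). Abbreviations: $p\vee q:=((p^{+}\to q^{+})^{+}\to(\neg p)^{-})\to((q^{-}\to p^{-})^{-}\to p^{-})$; an axiom written $A\leftrightarrow B$ stands for the two axioms $A\to B$ and $B\to A$, and $\vdash A\leftrightarrow B$ means $\vdash A\to B$ and $\vdash B\to A$. Axiom schemas of $\mathrm{q}\L^{*}$ (for all formulas $p,q,r$): (Q1) $(p\to q)\leftrightarrow(\neg q\to\neg p)$; (Q2) $1\leftrightarrow((1\to p)\to 1)$; (Q3) $p\leftrightarrow((q\to q)\to p)$; (Q4) $(p\to q)\leftrightarrow((q^{+}\to p^{-})\to(p^{+}\to q^{-}))$; (Q5) $\neg(p\to q)\leftrightarrow(q\to p)$; (Q6) $(p\to(\neg p\to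 q))^{+}\leftrightarrow(p^{+}\to(\neg p^{+}\to q^{+}))$; (Q7) $(p\to(q\vee r))\leftrightarrow((p\to r)\vee(p\to q))$; (Q8) $(p\vee(q\vee r))\leftrightarrow((p\vee q)\vee r)$; (Q9) $((p\to 1)\to((q\to 1)\to r))\to((q\to 1)\to((p\to 1)\to r))$; (Q10) $p\to 1$; (Q11) $((1\to 1)\to p^{+})\leftrightarrow((p\to 1)\to 1)$ and $((1\to 1)\to p^{-})\leftrightarrow((p\to\neg 1)\to\neg 1)$. Deduction rules: (R1) from $p$ and $p\to q$ infer $(r\to r)\to q$; (R2) from $(r\to r)\to(p\to q)$ infer $p\to q$; (R3) from $p\to q$ and $r\to t$ infer $(q\to r)\to(p\to t)$. $\vdash q$ means $q$ is derivable from the axioms by the rules. ($\sim$ is a congruence, so the operations are well defined.) An MV*-algebra is an algebra $\langle B;\oplus,-,0,1\rangle$ of type $\langle2,1,0,0\rangle$ such that for all $x,y,z\in B$: (MV*1) $x\oplus y=y\oplus x$; (MV*2) $(1\oplus x)\oplus(y\oplus(1\oplus z))=((1\oplus x)\oplus y)\oplus(1\oplus z)$; (MV*3) $x\oplus(-x)=0$; (MV*4) $(x\oplus 1)\oplus 1=1$; (MV*5) $x\oplus 0=x$; (MV*6) $-(x\oplus y)=(-x)\oplus(-y)$; (MV*7) $-(-x)=x$; (MV*8) $x\oplus y=(x^{+}\oplus y^{+})\oplus(x^{-}\oplus y^{-})$; (MV*9) $(-x\oplus(x\oplus y))^{+}=-(x^{+})\oplus(x^{+}\oplus y^{+})$;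 (MV*10) $x\vee y=y\vee x$; (MV*11) $x\vee(y\vee z)=(x\vee y)\vee z$; (MV*12) $x\oplus(y\vee z)=(x\oplus y)\vee(x\oplus z)$; where $x^{+}:=1\oplus(-1\oplus x)$, $x^{-}:=-1\oplus(1\oplus x)$ and $x\vee y:=(x^{+}\oplus(-x^{+}\oplus y^{+})^{+})\oplus(x^{-}\oplus(-x^{-}\oplus y^{-})^{+})$. *)

theory Defs
  imports Main
begin

datatype fm = Var nat | One | Imp fm fm | Neg fm | Pos fm | Ngt fm

definition Or :: "fm \<Rightarrow> fm \<Rightarrow> fm" where
  "Or p q = Imp (Imp (Pos (Imp (Pos p) (Pos q))) (Ngt (Neg p)))
                (Imp (Ngt (Imp (Ngt q) (Ngt p))) (Ngt p))"

inductive derivable :: "fm \<Rightarrow> bool" where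
  Q1a: "derivable (Imp (Imp p q) (Imp (Neg q) (Neg p)))"
| Q1b: "derivable (Imp (Imp (Neg q) (Neg p)) (Imp p q))"
| Q2a: "derivable (Imp One (Imp (Imp One p) One))"
| Q2b: "derivable (Imp (Imp (Imp One p) One) One)"
| Q3a: "derivable (Imp p (Imp (Imp q q) p))"
| Q3b: "derivable (Imp (Imp (Imp q q) p) p)"
| Q4a: "derivable (Imp (Imp p q) (Imp (Imp (Pos q) (Ngt p)) (Imp (Pos p) (Ngt q))))"
| Q4b: "derivable (Imp (Imp (Imp (Pos q) (Ngt p)) (Imp (Pos p) (Ngt q))) (Imp p q))"
| Q5a: "derivable (Imp (Neg (Imp p q)) (Imp q p))"
| Q5b: "derivable (Imp (Imp q p) (Neg (Imp p q)))"
| Q6a: "derivable (Imp (Pos (Imp p (Imp (Neg p) q))) (Imp (Pos p) (Imp (Neg (Pos p)) (Pos q))))"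
| Q6b: "derivable (Imp (Imp (Pos p) (Imp (Neg (Pos p)) (Pos q))) (Pos (Imp p (Imp (Neg p) q))))"
| Q7a: "derivable (Imp (Imp p (Or q r)) (Or (Imp p r) (Imp p q)))"
| Q7b: "derivable (Imp (Or (Imp p r) (Imp p q)) (Imp p (Or q r)))"
| Q8a: "derivable (Imp (Or p (Or q r)) (Or (Or p q) r))"
| Q8b: "derivable (Imp (Or (Or p q) r) (Or p (Or q r)))"
| Q9: "derivable (Imp (Imp (Imp p One) (Imp (Imp q One) r)) (Imp (Imp q One) (Imp (Imp p One) r)))"
| Q10: "derivable (Imp p One)"
| Q11a: "derivable (Imp (Imp (Imp One One) (Pos p)) (Imp (Imp p One) One))"
| Q11b: "derivable (Imp (Imp (Imp p One) One) (Imp (Imp One One) (Pos p)))"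
| Q11c: "derivable (Imp (Imp (Imp One One) (Ngt p)) (Imp (Imp p (Neg One)) (Neg One)))"
| Q11d: "derivable (Imp (Imp (Imp p (Neg One)) (Neg One)) (Imp (Imp One One) (Ngt p)))"
| R1: "derivable p \<Longrightarrow> derivable (Imp p q) \<Longrightarrow> derivable (Imp (Imp r r) q)"
| R2: "derivable (Imp (Imp r r) (Imp p q)) \<Longrightarrow> derivable (Imp p q)"
| R3: "derivable (Imp p q) \<Longrightarrow> derivable (Imp r t) \<Longrightarrow> derivable (Imp (Imp q r) (Imp p t))"

definition fm_equiv :: "fm \<Rightarrow> fm \<Rightarrow> bool" where
  "fm_equiv p q \<longleftrightarrow> derivable (Imp p q) \<and> derivable (Imp q p)"

definition equiv_rel :: "(fm \<times> fm) set" where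
  "equiv_rel = {(p, q). fm_equiv p q}"

definition cls :: "fm \<Rightarrow> fm set" where
  "cls p = equiv_rel `` {p}"

definition Lcarrier :: "fm set set" where
  "Lcarrier = UNIV // equiv_rel"

definition rep :: "fm set \<Rightarrow> fm" where
  "rep X = (SOME p. p \<in> X)"

definition Lneg :: "fm set \<Rightarrow> fm set" where
  "Lneg X = cls (Neg (rep X))"

definition Lplus :: "fm set \<Rightarrow> fm set \<Rightarrow> fm set" where
  "Lplus X Y = cls (Imp (Neg (rep X)) (rep Y))"

definition Lzero :: "fm set" where
  "Lzero = cls (Imp One One)"

definition Lone :: "fm set" where
  "Lone = cls One"

definition mv_pos :: "('a \<Rightarrow> 'a \<Rightarrow> 'a) \<Rightarrow> ('a \<Rightarrow> 'a) \<Rightarrow> 'a \<Rightarrow> 'a \<Rightarrow> 'a" where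
  "mv_pos pl ng o1 x = pl o1 (pl (ng o1) x)"

definition mv_ngt :: "('a \<Rightarrow> 'a \<Rightarrow> 'a) \<Rightarrow> ('a \<Rightarrow> 'a) \<Rightarrow> 'a \<Rightarrow> 'a \<Rightarrow> 'a" where
  "mv_ngt pl ng o1 x = pl (ng o1) (pl o1 x)"

definition mv_join :: "('a \<Rightarrow> 'a \<Rightarrow> 'a) \<Rightarrow> ('a \<Rightarrow> 'a) \<Rightarrow> 'a \<Rightarrow> 'a \<Rightarrow> 'a \<Rightarrow> 'a" where
  "mv_join pl ng o1 x y =
     (let xp = mv_pos pl ng o1 x; yp = mv_pos pl ng o1 y;
          xm = mv_ngt pl ng o1 x; ym = mv_ngt pl ng o1 y
      in pl (pl xp (mv_pos pl ng o1 (pl (ng xp) yp)))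
            (pl xm (mv_pos pl ng o1 (pl (ng xm) ym))))"

definition mv_star_algebra ::
  "'a set \<Rightarrow> ('a \<Rightarrow> 'a \<Rightarrow> 'a) \<Rightarrow> ('a \<Rightarrow> 'a) \<Rightarrow> 'a \<Rightarrow> 'a \<Rightarrow> bool" where
  "mv_star_algebra B pl ng z o1 \<longleftrightarrow>
     z \<in> B \<and> o1 \<in> B \<and>
     (\<forall>x\<in>B. \<forall>y\<in>B. pl x y \<in> B) \<and> (\<forall>x\<in>B. ng x \<in> B) \<and>
     (\<forall>x\<in>B. \<forall>y\<in>B. \<forall>zz\<in>B.
        pl x y = pl y x \<and>
        pl (pl o1 x) (pl y (pl o1 zz)) = pl (pl (pl o1 x) y) (pl o1 zz) \<and>
        pl x (ng x) = z \<and>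
        pl (pl x o1) o1 = o1 \<and>
        pl x z = x \<and>
        ng (pl x y) = pl (ng x) (ng y) \<and>
        ng (ng x) = x \<and>
        pl x y = pl (pl (mv_pos pl ng o1 x) (mv_pos pl ng o1 y))
                    (pl (mv_ngt pl ng o1 x) (mv_ngt pl ng o1 y)) \<and>
        mv_pos pl ng o1 (pl (ng x) (pl x y)) =
          pl (ng (mv_pos pl ng o1 x)) (pl (mv_pos pl ng o1 x) (mv_pos pl ng o1 y)) \<and>
        mv_join pl ng o1 x y = mv_join pl ng o1 y x \<and>
        mv_join pl ng o1 x (mv_join pl ng o1 y zz) = mv_join pl ng o1 (mv_join pl ng o1 x y) zz \<and>
        pl x (mv_join pl ng o1 y zz) = mv_join pl ng o1 (pl x y) (pl x zz))"

end

theory Submission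
  imports Defs
begin

abbreviation D where "D \<equiv> derivable"

lemma mp': "D A \<Longrightarrow> D (Imp A (Imp B C)) \<Longrightarrow> D (Imp B C)"
  using R1[of A "Imp B C" One] R2 by blast

lemma drefl: "D (Imp p p)"
proof -
  have "D (Imp (Imp (Imp (Imp One One) p) (Imp (Imp One One) p)) (Imp p p))"
    using R3[OF Q3a[of p One] Q3b[of One p]] .
  thus ?thesis using R2 by blast
qed

lemma dtrans: "D (Imp a b) \<Longrightarrow> D (Imp b c) \<Longrightarrow> D (Imp a c)"
  using R3[of a b b c] drefl mp' by blast

lemma dimp: "D (Imp a' a) \<Longrightarrow> D (Imp b b') \<Longrightarrow> D (Imp (Imp a b) (Imp a' b'))"
  using R3 by blast

lemma dneg: "D (Imp a b) \<Longrightarrow> D (Imp (Neg b) (Neg a))"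
  using mp'[OF _ Q1a] by blast

lemma dpos1: "D (Imp (Pos p) (Imp (Imp p One) One))"
  using dtrans[OF Q3a[of "Pos p" One] Q11a] .
lemma dpos2: "D (Imp (Imp (Imp p One) One) (Pos p))"
  using dtrans[OF Q11b Q3b] .
lemma dngt1: "D (Imp (Ngt p) (Imp (Imp p (Neg One)) (Neg One)))"
  using dtrans[OF Q3a[of "Ngt p" One] Q11c] .
lemma dngt2: "D (Imp (Imp (Imp p (Neg One)) (Neg One)) (Ngt p))"
  using dtrans[OF Q11d Q3b] .

lemma dposm: "D (Imp a b) \<Longrightarrow> D (Imp (Pos a) (Pos b))"
  by (meson dtrans dpos1 dpos2 dimp drefl)
lemma dngtm: "D (Imp a b) \<Longrightarrow> D (Imp (Ngt a) (Ngt b))"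
  by (meson dtrans dngt1 dngt2 dimp drefl)

lemma dzero: "D (Imp (Imp a a) (Imp b b))"
  using mp'[OF drefl Q3a[of "Imp b b" a]] .

abbreviation E where "E \<equiv> fm_equiv"

lemma equiv_rel_equiv: "equiv UNIV equiv_rel"
  unfolding equiv_def refl_on_def sym_def trans_def equiv_rel_def fm_equiv_def
  using drefl dtrans by blast

lemma Econg:
  "E a a' \<Longrightarrow> E (Neg a) (Neg a')"
  "E a a' \<Longrightarrow> E (Pos a) (Pos a')"
  "E a a' \<Longrightarrow> E (Ngt a) (Ngt a')"
  "E a a' \<Longrightarrow> E b b' \<Longrightarrow> E (Imp a b) (Imp a' b')"
  unfolding fm_equiv_def using dneg dposm dngtm dimp by blast+

typedef L = Lcarrier
  unfolding Lcarrier_def quotient_def by blast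

definition q :: "fm \<Rightarrow> L" where "q p = Abs_L (cls p)"

lemma cls_in: "cls p \<in> Lcarrier"
  unfolding cls_def Lcarrier_def by (rule quotientI) simp

lemma Rep_q: "Rep_L (q p) = cls p"
  unfolding q_def using cls_in Abs_L_inverse by blast

lemma cls_eq: "cls a = cls b \<longleftrightarrow> E a b"
  unfolding cls_def using eq_equiv_class_iff[OF equiv_rel_equiv, of a b]
  by (simp add: equiv_rel_def)

lemma q_eq: "q a = q b \<longleftrightarrow> E a b"
  by (metis Rep_q Rep_L_inject cls_eq)

lemma L_cases: "\<exists>p. x = q p"
proof -
  have "Rep_L x \<in> Lcarrier" using Rep_L by blast
  then obtain p where "Rep_L x = cls p"
    unfolding Lcarrier_def cls_def by (auto elim: quotientE)
  thus ?thesis by (metis Rep_q Rep_L_inverse)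
qed

lemma rep_cls: "E (rep (cls p)) p"
proof -
  have "p \<in> cls p" unfolding cls_def equiv_rel_def fm_equiv_def using drefl by blast
  hence "rep (cls p) \<in> cls p" unfolding rep_def by (rule someI)
  thus ?thesis unfolding cls_def equiv_rel_def fm_equiv_def by blast
qed

lemma rep_Rep: "E (rep (Rep_L (q p))) p"
  using rep_cls Rep_q by simp

definition nL :: "L \<Rightarrow> L" where "nL x = q (Neg (rep (Rep_L x)))"
definition pL :: "L \<Rightarrow> L" where "pL x = q (Pos (rep (Rep_L x)))"
definition mL :: "L \<Rightarrow> L" where "mL x = q (Ngt (rep (Rep_L x)))"
definition iL :: "L \<Rightarrow> L \<Rightarrow> L" where "iL x y = q (Imp (rep (Rep_L x)) (rep (Rep_L y)))"
definition oneL :: L where "oneL = q One"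

lemma hom:
  "nL (q a) = q (Neg a)" "pL (q a) = q (Pos a)" "mL (q a) = q (Ngt a)"
  "iL (q a) (q b) = q (Imp a b)"
  unfolding nL_def pL_def mL_def iL_def q_eq using Econg rep_Rep by blast+

lemma hom_or: "q (Or a b) = iL (iL (pL (iL (pL (q a)) (pL (q b)))) (mL (nL (q a))))
                (iL (mL (iL (mL (q b)) (mL (q a)))) (mL (q a)))"
  unfolding Or_def hom ..

definition oL :: "L \<Rightarrow> L \<Rightarrow> L" where
  "oL x y = iL (iL (pL (iL (pL x) (pL y))) (mL (nL x))) (iL (mL (iL (mL y) (mL x))) (mL x))"

lemma hom_or': "q (Or a b) = oL (q a) (q b)"
  unfolding oL_def hom_or ..

lemmas homs = hom oneL_def hom_or'[symmetric]


lemma A0: "iL x x = iL y y"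
  using L_cases[of x] L_cases[of y] by (auto simp: homs q_eq fm_equiv_def dzero)
lemma A1: "iL x y = iL (nL y) (nL x)"
  using L_cases[of x] L_cases[of y] by (auto simp: homs q_eq fm_equiv_def Q1a Q1b)
lemma A2: "iL (iL oneL x) oneL = oneL"
  using L_cases[of x] by (auto simp: homs q_eq fm_equiv_def Q2a Q2b)
lemma A3: "iL (iL y y) x = x"
  using L_cases[of x] L_cases[of y] by (auto simp: homs q_eq fm_equiv_def Q3a Q3b)
lemma A4: "iL x y = iL (iL (pL y) (mL x)) (iL (pL x) (mL y))"
  using L_cases[of x] L_cases[of y] by (auto simp: homs q_eq fm_equiv_def Q4a Q4b)
lemma A5: "nL (iL x y) = iL y x"
  using L_cases[of x] L_cases[of y] by (auto simp: homs q_eq fm_equiv_def Q5a Q5b)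
lemma A6: "pL (iL x (iL (nL x) y)) = iL (pL x) (iL (nL (pL x)) (pL y))"
  using L_cases[of x] L_cases[of y] by (auto simp: homs q_eq fm_equiv_def Q6a Q6b)
lemma A7: "iL x (oL y z) = oL (iL x z) (iL x y)"
  using L_cases[of x] L_cases[of y] L_cases[of z] by (auto simp: homs q_eq fm_equiv_def Q7a Q7b)
lemma A8: "oL x (oL y z) = oL (oL x y) z"
  using L_cases[of x] L_cases[of y] L_cases[of z] by (auto simp: homs q_eq fm_equiv_def Q8a Q8b)
lemma A9: "iL (iL x oneL) (iL (iL y oneL) r) = iL (iL y oneL) (iL (iL x oneL) r)"
  using L_cases[of x] L_cases[of y] L_cases[of r] by (auto simp: homs q_eq fm_equiv_def Q9)
lemma A11p: "pL x = iL (iL x oneL) oneL"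
  using L_cases[of x] by (auto simp: homs q_eq fm_equiv_def dpos1 dpos2)
lemma A11m: "mL x = iL (iL x (nL oneL)) (nL oneL)"
  using L_cases[of x] by (auto simp: homs q_eq fm_equiv_def dngt1 dngt2)

definition zL :: L where "zL = iL oneL oneL"
definition plusL :: "L \<Rightarrow> L \<Rightarrow> L" where "plusL x y = iL (nL x) y"

lemma L1: "iL x x = zL" unfolding zL_def by (rule A0)
lemma L2: "nL zL = zL" unfolding zL_def by (rule A5)
lemma L6: "iL zL x = x" using A3 L1 by metis
lemma L3: "iL x zL = nL x" by (metis A1 L2 L6)
lemma L4: "nL (nL x) = x" by (metis L3 A5 L6)
lemma L5: "iL (nL x) y = iL (nL y) x" by (metis A1 L4)
lemma L7: "iL x y = iL (nL y) (nL x)" by (rule A1)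

lemma PSq: "pL x = iL (nL oneL) (iL oneL x)" by (metis A11p A1 A5)
lemma NGq: "mL x = iL oneL (iL (nL oneL) x)" by (metis A11m A1 A5 L4)
lemma NGneg: "mL (nL x) = nL (pL x)"
  by (metis PSq NGq A5 A1 L4)
lemma PSneg: "pL (nL x) = nL (mL x)"
  by (metis NGneg L4)

lemma mvpos: "mv_pos plusL nL oneL x = pL x"
  unfolding mv_pos_def plusL_def PSq L4 ..
lemma mvngt: "mv_ngt plusL nL oneL x = mL x"
  unfolding mv_ngt_def plusL_def NGq L4 ..

lemma mvjoin: "mv_join plusL nL oneL x y = oL x y"
proof -
  have "oL x y = iL (iL (pL (iL (pL x) (pL y))) (nL (pL x))) (iL (mL (iL (mL y) (mL x))) (mL x))"
    unfolding oL_def NGneg ..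
  also have "\<dots> = plusL (plusL (pL x) (pL (plusL (nL (pL x)) (pL y))))
                     (plusL (mL x) (pL (plusL (nL (mL x)) (mL y))))"
    unfolding plusL_def by (metis A5 L4 L5 PSneg)
  finally show ?thesis unfolding mv_join_def mvpos mvngt Let_def by simp
qed

lemma MV1: "plusL x y = plusL y x" unfolding plusL_def by (rule L5)
lemma MV6: "nL (plusL x y) = plusL (nL x) (nL y)" unfolding plusL_def by (metis A5 L7)
lemma MV7: "nL (nL x) = x" by (rule L4)
lemma MV3: "plusL x (nL x) = zL" unfolding plusL_def by (rule L1)
lemma MV4: "plusL (plusL x oneL) oneL = oneL" unfolding plusL_def by (metis A5 A2)
lemma MV5: "plusL x zL = x" unfolding plusL_def by (metis L3 L4)

lemma exch: "plusL (nL (plusL oneL x)) (plusL (nL (plusL oneL z)) r)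
           = plusL (nL (plusL oneL z)) (plusL (nL (plusL oneL x)) r)"
proof -
  have a: "plusL oneL x = iL (nL x) oneL" for x unfolding plusL_def by (rule L5)
  show ?thesis unfolding a unfolding plusL_def L4 by (rule A9)
qed

lemma MV2: "plusL (plusL oneL x) (plusL y (plusL oneL z)) = plusL (plusL (plusL oneL x) y) (plusL oneL z)"
proof -
  let ?a = "plusL oneL x" and ?b = "plusL oneL z"
  have "nL (plusL ?a (plusL y ?b)) = plusL (nL ?a) (plusL (nL ?b) (nL y))"
    by (metis MV6 MV1)
  also have "\<dots> = plusL (nL ?b) (plusL (nL ?a) (nL y))" by (rule exch)
  also have "\<dots> = nL (plusL (plusL ?a y) ?b)" by (metis MV6 MV1)
  finally show ?thesis by (metis L4)
qed

lemma MV8: "plusL x y = plusL (plusL (pL x) (pL y)) (plusL (mL x) (mL y))"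
proof -
  have "plusL x y = iL (nL x) y" unfolding plusL_def ..
  also have "\<dots> = iL (iL (pL y) (mL (nL x))) (iL (pL (nL x)) (mL y))" by (rule A4)
  also have "\<dots> = plusL (plusL (pL x) (pL y)) (plusL (mL x) (mL y))"
    unfolding NGneg PSneg plusL_def by (metis A5 L4 L5)
  finally show ?thesis .
qed

lemma MV9: "pL (plusL (nL x) (plusL x y)) = plusL (nL (pL x)) (plusL (pL x) (pL y))"
  unfolding plusL_def L4 by (rule A6)

lemma MV10: "oL x y = oL y x" by (metis A7 L6)
lemma MV11: "oL x (oL y z) = oL (oL x y) z" by (rule A8)
lemma MV12: "plusL x (oL y z) = oL (plusL x y) (plusL x z)"
  unfolding plusL_def by (metis A7 MV10)

lemma Rep_cases: "\<exists>a. Rep_L x = cls a"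
  using L_cases[of x] Rep_q by metis

lemma br_plus: "Lplus (Rep_L x) (Rep_L y) = Rep_L (plusL x y)"
proof -
  obtain a b where ab: "x = q a" "y = q b" using L_cases by metis
  have "Lplus (Rep_L x) (Rep_L y) = Rep_L (q (Imp (Neg (rep (cls a))) (rep (cls b))))"
    unfolding Lplus_def ab Rep_q ..
  also have "q (Imp (Neg (rep (cls a))) (rep (cls b))) = q (Imp (Neg a) b)"
    unfolding q_eq using Econg rep_cls by blast
  finally show ?thesis unfolding ab plusL_def hom by simp
qed

lemma br_neg: "Lneg (Rep_L x) = Rep_L (nL x)"
proof -
  obtain a where ab: "x = q a" using L_cases by metis
  have "Lneg (Rep_L x) = Rep_L (q (Neg (rep (cls a))))"
    unfolding Lneg_def ab Rep_q ..
  also have "q (Neg (rep (cls a))) = q (Neg a)"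
    unfolding q_eq using Econg rep_cls by blast
  finally show ?thesis unfolding ab hom by simp
qed

lemma br_one: "Lone = Rep_L oneL" unfolding Lone_def oneL_def Rep_q ..
lemma br_zero: "Lzero = Rep_L zL" unfolding Lzero_def zL_def oneL_def hom Rep_q ..

lemma br_pos: "mv_pos Lplus Lneg Lone (Rep_L x) = Rep_L (pL x)"
  unfolding mv_pos_def br_one br_neg br_plus mvpos[symmetric] mv_pos_def ..
lemma br_ngt: "mv_ngt Lplus Lneg Lone (Rep_L x) = Rep_L (mL x)"
  unfolding mv_ngt_def br_one br_neg br_plus mvngt[symmetric] mv_ngt_def ..
lemma br_join: "mv_join Lplus Lneg Lone (Rep_L x) (Rep_L y) = Rep_L (oL x y)"
  unfolding mv_join_def Let_def br_pos br_ngt br_neg br_plus mvjoin[symmetric]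
    mvpos mvngt ..

lemma range_L: "Lcarrier = range Rep_L"
  using type_definition.Rep_range[OF type_definition_L] by simp

theorem proposition5p4:
  shows "mv_star_algebra Lcarrier Lplus Lneg Lzero Lone"
proof -
  have one: "Lone = Rep_L oneL" by (rule br_one)
  show ?thesis
    unfolding mv_star_algebra_def range_L
  proof (intro conjI ballI)
    fix X Y Z assume "X \<in> range Rep_L" "Y \<in> range Rep_L" "Z \<in> range Rep_L"
    then obtain x y z where xyz: "X = Rep_L x" "Y = Rep_L y" "Z = Rep_L z" by blast
    show "Lplus X Y = Lplus Y X" unfolding xyz br_plus by (rule arg_cong[where f=Rep_L], rule MV1)
    show "Lplus (Lplus Lone X) (Lplus Y (Lplus Lone Z)) = Lplus (Lplus (Lplus Lone X) Y) (Lplus Lone Z)"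
      unfolding xyz one br_plus by (rule arg_cong[where f=Rep_L], rule MV2)
    show "Lplus X (Lneg X) = Lzero" unfolding xyz br_neg br_plus MV3 br_zero ..
    show "Lplus (Lplus X Lone) Lone = Lone" unfolding xyz one br_plus by (rule arg_cong[where f=Rep_L], rule MV4)
    show "Lplus X Lzero = X" unfolding xyz br_zero br_plus by (rule arg_cong[where f=Rep_L], rule MV5)
    show "Lneg (Lplus X Y) = Lplus (Lneg X) (Lneg Y)" unfolding xyz br_neg br_plus by (rule arg_cong[where f=Rep_L], rule MV6)
    show "Lneg (Lneg X) = X" unfolding xyz br_neg by (rule arg_cong[where f=Rep_L], rule MV7)
    show "Lplus X Y = Lplus (Lplus (mv_pos Lplus Lneg Lone X) (mv_pos Lplus Lneg Lone Y))
       (Lplus (mv_ngt Lplus Lneg Lone X) (mv_ngt Lplus Lneg Lone Y))"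
      unfolding xyz br_pos br_ngt br_plus by (rule arg_cong[where f=Rep_L], rule MV8)
    show "mv_pos Lplus Lneg Lone (Lplus (Lneg X) (Lplus X Y)) =
       Lplus (Lneg (mv_pos Lplus Lneg Lone X)) (Lplus (mv_pos Lplus Lneg Lone X) (mv_pos Lplus Lneg Lone Y))"
      unfolding xyz br_neg br_plus br_pos by (rule arg_cong[where f=Rep_L], rule MV9)
    show "mv_join Lplus Lneg Lone X Y = mv_join Lplus Lneg Lone Y X"
      unfolding xyz br_join by (rule arg_cong[where f=Rep_L], rule MV10)
    show "mv_join Lplus Lneg Lone X (mv_join Lplus Lneg Lone Y Z) =
       mv_join Lplus Lneg Lone (mv_join Lplus Lneg Lone X Y) Z"
      unfolding xyz br_join by (rule arg_cong[where f=Rep_L], rule MV11)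
    show "Lplus X (mv_join Lplus Lneg Lone Y Z) = mv_join Lplus Lneg Lone (Lplus X Y) (Lplus X Z)"
      unfolding xyz br_join br_plus by (rule arg_cong[where f=Rep_L], rule MV12)
  next
    show "Lzero \<in> range Rep_L" unfolding br_zero by blast
    show "Lone \<in> range Rep_L" unfolding one by blast
    fix X Y assume "X \<in> range Rep_L" "Y \<in> range Rep_L"
    then obtain x y where xy: "X = Rep_L x" "Y = Rep_L y" by blast
    show "Lplus X Y \<in> range Rep_L" unfolding xy br_plus by blast
    show "Lneg X \<in> range Rep_L" unfolding xy br_neg by blast
  qed
qed

end
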